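(* Let $a,b\ge1$ and let $X(a,b)$ be the digraph with vertex set $\{x_1,\dots,x_a\}\cup\{y_1,\dots,y_a\}\cup\{z_1,\dots,z_b\}$ and arc set $\{x_jy_j,\,y_jx_j: 1\le j\le a\}\cup\{x_jz_\ell,\, z_\ell y_j: 1\le j\le a,\ 1\le \ell\le b\}$. Then the eigenvalues of $H(X(a,b))$ are $$\frac{-1+\sqrt{1+8ab}}{2},\quad 1^{(a)},\quad 0^{(b-1)},\quad (-1)^{(a-1)},\quad \frac{-1-\sqrt{1+8ab}}{2},$$ where superscripts denote multiplicities.
   Context: For a digraph $X$ (finite vertex set, arcs are ordered pairs of distinct vertices), the Hermitian adjacency matrix $H(X)$ has $(u,v)$-entry $1$ if $uv$ and $vu$ are arcs, $i$ if only $uv$ is an arc, $-i$ if only $vu$ is an arc, and $0$ otherwise. *)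

theory Defs
  imports "Jordan_Normal_Form.Char_Poly"
begin

definition herm_adj :: "nat \<Rightarrow> (nat \<Rightarrow> nat \<Rightarrow> bool) \<Rightarrow> complex mat" where
  "herm_adj n arc = mat n n (\<lambda>(u, v).
     if arc u v \<and> arc v u then 1
     else if arc u v then \<i>
     else if arc v u then - \<i>
     else 0)"

text \<open>The digraph X(a,b) on vertices {0..<2a+b}: x_j = j-1, y_j = a+j-1,
  z_l = 2a+l-1 (j in 1..a, l in 1..b, shifted to 0-based indices).\<close>
definition Xab_arc :: "nat \<Rightarrow> nat \<Rightarrow> nat \<Rightarrow> nat \<Rightarrow> bool" where
  "Xab_arc a b u v \<longleftrightarrow>
     (\<exists>j<a. (u = j \<and> v = a + j) \<or> (u = a + j \<and> v = j)) \<or>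
     (\<exists>j<a. \<exists>l<b. (u = j \<and> v = 2*a + l) \<or> (u = 2*a + l \<and> v = a + j))"

definition Xab_herm :: "nat \<Rightarrow> nat \<Rightarrow> complex mat" where
  "Xab_herm a b = herm_adj (2*a + b) (Xab_arc a b)"

end

theory Submission
  imports Defs
begin

lemma arc_char: "Xab_arc a b u v \<longleftrightarrow>
  (u < a \<and> v = a + u) \<or> (a \<le> u \<and> u < 2*a \<and> v + a = u) \<or>
  (u < a \<and> 2*a \<le> v \<and> v < 2*a+b) \<or> (2*a \<le> u \<and> u < 2*a+b \<and> a \<le> v \<and> v < 2*a)"
  unfolding Xab_arc_def
  apply (rule iffI)
   apply (elim disjE exE; auto)
  apply (elim disjE)
     apply auto[1]
    apply (rule disjI1, rule exI[of _ "u - a"], auto)[1]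
   apply (rule disjI2, rule exI[of _ u], auto intro!: exI[of _ "v - 2*a"])[1]
  apply (rule disjI2, rule exI[of _ "v - a"], auto intro!: exI[of _ "u - 2*a"])[1]
  done

definition Hf :: "nat \<Rightarrow> nat \<Rightarrow> nat \<Rightarrow> complex" where
"Hf a i k = (if i < a then (if k < a then 0 else if k < 2*a then (if k = a + i then 1 else 0) else \<i>)
   else if i < 2*a then (if k < a then (if i = a + k then 1 else 0) else if k < 2*a then 0 else -\<i>)
   else (if k < a then -\<i> else if k < 2*a then \<i> else 0))"

lemma herm_entry: assumes "i < 2*a+b" "k < 2*a+b"
  shows "Xab_herm a b $$ (i,k) = Hf a i k"
  using assms unfolding Xab_herm_def herm_adj_def Hf_def arc_char
  by auto

lemma sum_split2: "(\<Sum>m<(x::nat)+y. f m) = (\<Sum>m<x. f m) + (\<Sum>m<y. f (x+m))"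
  by (induction y) (auto simp: add.assoc)

lemma sum_split3: "(\<Sum>m<2*(a::nat)+b. f m) = (\<Sum>j<a. f j) + (\<Sum>j<a. f (a+j)) + (\<Sum>l<b. f (2*a+l))"
  using sum_split2[where x="2*a" and y=b and f=f] sum_split2[where x=a and y=a and f=f] by (simp add: mult_2)

definition Pf :: "nat \<Rightarrow> complex \<Rightarrow> nat \<Rightarrow> nat \<Rightarrow> complex" where
"Pf a c i k = (if k < a then (if i = k then 1 else 0) + (if i = a + k then 1 else 0)
  else if k < 2*a then (if k \<le> i \<and> i < 2*a then -2 else 0) + (if 2*a \<le> i then c * of_nat (2*a - k) / of_nat a else 0)
  else (if i = k then 1 else 0) - (if i = k+1 then 1 else 0))"

definition Tf :: "nat \<Rightarrow> nat \<Rightarrow> complex \<Rightarrow> complex \<Rightarrow> nat \<Rightarrow> nat \<Rightarrow> complex" where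
"Tf a b r c m k = (if k < a then (if m = k then 1 else 0)
 else if k < 2*a then (if m < a \<and> k - a \<le> m then -2 else 0) + (if m < a then (1+r) * of_nat (2*a-k) / of_nat a else 0)
     + (if m = a then (1+r) * of_nat (2*a-k) / of_nat a else 0) + (if m = k then -1 else 0)
 else if k + 1 < 2*a + b then 0
 else (if m < a then \<i> else 0) + (if m = a then \<i> else 0) + (if 2*a \<le> m then -\<i>*c*of_nat(m - 2*a + 1) else 0))"

lemma ifz_mult[simp]: "(if P then x else (0::complex)) * y = (if P then x * y else 0)"
   "y * (if P then x else (0::complex)) = (if P then y * x else 0)" by auto

lemma if_if_conj[simp]: "(if P then (if Q then x else 0) else (0::complex)) = (if P \<and> Q then x else 0)"
  by auto

lemma sum_ge[simp]: "(\<Sum>j<a. if k \<le> j then c else (0::complex)) = of_nat (a-k) * c"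
proof -
  have "(\<Sum>j<a. if k \<le> j then c else (0::complex)) = (\<Sum>j\<in>{k..<a}. c)"
    by (rule sum.mono_neutral_cong_right) auto
  then show ?thesis by simp
qed

lemma sum_delta_conj[simp]:
  "finite S \<Longrightarrow> (\<Sum>j\<in>S. if j = i \<and> P j then f j else (0::complex)) = (if i \<in> S \<and> P i then f i else 0)"
  "finite S \<Longrightarrow> (\<Sum>j\<in>S. if i = j \<and> P j then f j else (0::complex)) = (if i \<in> S \<and> P i then f i else 0)"
  "finite S \<Longrightarrow> (\<Sum>j\<in>S. if P j \<and> j = i then f j else (0::complex)) = (if i \<in> S \<and> P i then f i else 0)"
  "finite S \<Longrightarrow> (\<Sum>j\<in>S. if P j \<and> i = j then f j else (0::complex)) = (if i \<in> S \<and> P i then f i else 0)"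
proof -
  assume fin: "finite S"
  have *: "(\<Sum>j\<in>S. if j = i then (if P j then f j else 0) else (0::complex)) = (if i \<in> S \<and> P i then f i else 0)"
    using sum.delta[OF fin, of i "\<lambda>j. if P j then f j else 0"] by simp
  show "(\<Sum>j\<in>S. if j = i \<and> P j then f j else (0::complex)) = (if i \<in> S \<and> P i then f i else 0)"
    by (rule trans[OF _ *], rule sum.cong, auto)
  show "(\<Sum>j\<in>S. if i = j \<and> P j then f j else (0::complex)) = (if i \<in> S \<and> P i then f i else 0)"
    by (rule trans[OF _ *], rule sum.cong, auto)
  show "(\<Sum>j\<in>S. if P j \<and> j = i then f j else (0::complex)) = (if i \<in> S \<and> P i then f i else 0)"
    by (rule trans[OF _ *], rule sum.cong, auto)
  show "(\<Sum>j\<in>S. if P j \<and> i = j then f j else (0::complex)) = (if i \<in> S \<and> P i then f i else 0)"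
    by (rule trans[OF _ *], rule sum.cong, auto)
qed

lemma if_div_neg[simp]: "(if P then x else (0::complex)) / y = (if P then x / y else 0)"
  "- (if P then x else (0::complex)) = (if P then - x else 0)" by auto

lemma sum_delta_Suc[simp]:
  "(\<Sum>l<k. if i = Suc l then f l else (0::complex)) = (if 0 < i \<and> i \<le> k then f (i - 1) else 0)"
  "(\<Sum>l<k. if Suc l = i then f l else (0::complex)) = (if 0 < i \<and> i \<le> k then f (i - 1) else 0)"
proof -
  have "(\<Sum>l<k. if i = Suc l then f l else (0::complex)) = (\<Sum>l<k. if l = i - 1 then (if 0 < i then f l else 0) else 0)"
    by (rule sum.cong) auto
  also have "\<dots> = (if 0 < i \<and> i \<le> k then f (i - 1) else 0)" by (subst sum.delta) auto
  finally show "(\<Sum>l<k. if i = Suc l then f l else (0::complex)) = (if 0 < i \<and> i \<le> k then f (i - 1) else 0)" .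
  then show "(\<Sum>l<k. if Suc l = i then f l else (0::complex)) = (if 0 < i \<and> i \<le> k then f (i - 1) else 0)"
    by (simp add: eq_commute[of "Suc _" i])
qed

lemma arith_simps[simp]:
  "2*a \<le> a + i \<longleftrightarrow> a \<le> (i::nat)" "a + i < 2*a \<longleftrightarrow> i < (a::nat)" "\<not> 2*a + l < (a::nat)"
  "\<not> 2*a + l < 2*(a::nat)" "\<not> a + j < (a::nat)" "2*a - (a+k) = a - (k::nat)" "a \<le> 2*a + (l::nat)"
  "2*a \<le> 2*a + (l::nat)" "\<not> 2*a \<le> (i::nat) \<longleftrightarrow> i < 2*a"
  "(a + j = 2*a + l) = (j = a + l)" "(2*a + l = a + j) = (l + a = j)" "(2*a + l - 2*a) = l" "(a + j) - a = j"
  by linarith+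

lemma cfacts: assumes c: "c = -\<i>*(1+r)/of_nat b" and rr: "r*r+r = 2*of_nat a*of_nat b" and a: "(a::nat) \<ge> 1" and b: "b \<ge> 1"
  shows "complex_of_nat b * (\<i> * c) = 1 + r" "complex_of_nat b * (\<i> * (c * x)) = (1 + r) * x"
    "c * r = -2*\<i>*of_nat a" "c * (r * x) = -2*\<i>*of_nat a * x"
proof -
  have bz: "complex_of_nat b \<noteq> 0" "complex_of_nat a \<noteq> 0" using a b by auto
  show bc: "complex_of_nat b * (\<i> * c) = 1 + r" using bz unfolding c by (simp add: field_simps)
  show "complex_of_nat b * (\<i> * (c * x)) = (1 + r) * x" by (subst bc[symmetric]) (simp add: algebra_simps)
  have "c * r = -\<i>*(r*r+r)/of_nat b" unfolding c by (simp add: algebra_simps)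
  also have "\<dots> = -2*\<i>*of_nat a" using bz by (simp add: rr)
  finally show cr: "c * r = -2*\<i>*of_nat a" .
  show "c * (r * x) = -2*\<i>*of_nat a * x" by (subst cr[symmetric]) (simp add: algebra_simps)
qed

lemma t_xx: assumes "i < a" "k < a" "c = -\<i>*(1+r)/of_nat b" "r*r+r = 2*of_nat a*of_nat b" "a \<ge> 1" "b \<ge> 1"
  shows "(\<Sum>m<2*a+b. Hf a (i) m * Pf a c m (k)) = (\<Sum>m<2*a+b. Pf a c (i) m * Tf a b r c m (k))"
  using assms(1,2,5) cfacts[OF assms(3-6)] unfolding sum_split3 Hf_def Pf_def Tf_def 
  by (auto cong: sum.cong_simp if_cong simp: sum.delta sum.delta' ring_distribs sum.distrib sum_subtractf add.assoc add_divide_distrib diff_divide_distrib)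

lemma t_xy: assumes "i < a" "k < a" "c = -\<i>*(1+r)/of_nat b" "r*r+r = 2*of_nat a*of_nat b" "a \<ge> 1" "b \<ge> 1"
  shows "(\<Sum>m<2*a+b. Hf a (i) m * Pf a c m (a+k)) = (\<Sum>m<2*a+b. Pf a c (i) m * Tf a b r c m (a+k))"
  using assms(1,2,5) cfacts[OF assms(3-6)] unfolding sum_split3 Hf_def Pf_def Tf_def 
  by (auto cong: sum.cong_simp if_cong simp: sum.delta sum.delta' ring_distribs sum.distrib sum_subtractf add.assoc add_divide_distrib diff_divide_distrib)

lemma t_xz: assumes "i < a" "k+1 < b" "c = -\<i>*(1+r)/of_nat b" "r*r+r = 2*of_nat a*of_nat b" "a \<ge> 1" "b \<ge> 1"
  shows "(\<Sum>m<2*a+b. Hf a (i) m * Pf a c m (2*a+k)) = (\<Sum>m<2*a+b. Pf a c (i) m * Tf a b r c m (2*a+k))"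
  using assms(1,2,5) cfacts[OF assms(3-6)] unfolding sum_split3 Hf_def Pf_def Tf_def 
  by (auto cong: sum.cong_simp if_cong simp: sum.delta sum.delta' ring_distribs sum.distrib sum_subtractf add.assoc add_divide_distrib diff_divide_distrib)

lemma t_xw: assumes "i < a" "b = Suc k" "c = -\<i>*(1+r)/of_nat b" "r*r+r = 2*of_nat a*of_nat b" "a \<ge> 1" "b \<ge> 1"
  shows "(\<Sum>m<2*a+b. Hf a (i) m * Pf a c m (2*a+k)) = (\<Sum>m<2*a+b. Pf a c (i) m * Tf a b r c m (2*a+k))"
  using assms(1,2,5) cfacts[OF assms(3-6)] unfolding sum_split3 Hf_def Pf_def Tf_def 
  by (auto cong: sum.cong_simp if_cong simp: sum.delta sum.delta' ring_distribs sum.distrib sum_subtractf add.assoc add_divide_distrib diff_divide_distrib)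

lemma t_yx: assumes "i < a" "k < a" "c = -\<i>*(1+r)/of_nat b" "r*r+r = 2*of_nat a*of_nat b" "a \<ge> 1" "b \<ge> 1"
  shows "(\<Sum>m<2*a+b. Hf a (a+i) m * Pf a c m (k)) = (\<Sum>m<2*a+b. Pf a c (a+i) m * Tf a b r c m (k))"
  using assms(1,2,5) cfacts[OF assms(3-6)] unfolding sum_split3 Hf_def Pf_def Tf_def 
  by (auto cong: sum.cong_simp if_cong simp: sum.delta sum.delta' ring_distribs sum.distrib sum_subtractf add.assoc add_divide_distrib diff_divide_distrib)

lemma t_yy: assumes "i < a" "k < a" "c = -\<i>*(1+r)/of_nat b" "r*r+r = 2*of_nat a*of_nat b" "a \<ge> 1" "b \<ge> 1"
  shows "(\<Sum>m<2*a+b. Hf a (a+i) m * Pf a c m (a+k)) = (\<Sum>m<2*a+b. Pf a c (a+i) m * Tf a b r c m (a+k))"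
  using assms(1,2,5) cfacts[OF assms(3-6)] unfolding sum_split3 Hf_def Pf_def Tf_def 
  by (auto cong: sum.cong_simp if_cong simp: sum.delta sum.delta' ring_distribs sum.distrib sum_subtractf add.assoc add_divide_distrib diff_divide_distrib)

lemma t_yz: assumes "i < a" "k+1 < b" "c = -\<i>*(1+r)/of_nat b" "r*r+r = 2*of_nat a*of_nat b" "a \<ge> 1" "b \<ge> 1"
  shows "(\<Sum>m<2*a+b. Hf a (a+i) m * Pf a c m (2*a+k)) = (\<Sum>m<2*a+b. Pf a c (a+i) m * Tf a b r c m (2*a+k))"
  using assms(1,2,5) cfacts[OF assms(3-6)] unfolding sum_split3 Hf_def Pf_def Tf_def 
  by (auto cong: sum.cong_simp if_cong simp: sum.delta sum.delta' ring_distribs sum.distrib sum_subtractf add.assoc add_divide_distrib diff_divide_distrib)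

lemma t_yw: assumes "i < a" "b = Suc k" "c = -\<i>*(1+r)/of_nat b" "r*r+r = 2*of_nat a*of_nat b" "a \<ge> 1" "b \<ge> 1"
  shows "(\<Sum>m<2*a+b. Hf a (a+i) m * Pf a c m (2*a+k)) = (\<Sum>m<2*a+b. Pf a c (a+i) m * Tf a b r c m (2*a+k))"
  using assms(1,2,5) cfacts[OF assms(3-6)] unfolding sum_split3 Hf_def Pf_def Tf_def 
  by (auto cong: sum.cong_simp if_cong simp: sum.delta sum.delta' ring_distribs sum.distrib sum_subtractf add.assoc add_divide_distrib diff_divide_distrib)

lemma t_zx: assumes "i < b" "k < a" "c = -\<i>*(1+r)/of_nat b" "r*r+r = 2*of_nat a*of_nat b" "a \<ge> 1" "b \<ge> 1"
  shows "(\<Sum>m<2*a+b. Hf a (2*a+i) m * Pf a c m (k)) = (\<Sum>m<2*a+b. Pf a c (2*a+i) m * Tf a b r c m (k))"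
  using assms(1,2,5) cfacts[OF assms(3-6)] unfolding sum_split3 Hf_def Pf_def Tf_def 
  by (auto cong: sum.cong_simp if_cong simp: sum.delta sum.delta' ring_distribs sum.distrib sum_subtractf add.assoc add_divide_distrib diff_divide_distrib)

lemma t_zy: assumes "i < b" "k < a" "c = -\<i>*(1+r)/of_nat b" "r*r+r = 2*of_nat a*of_nat b" "a \<ge> 1" "b \<ge> 1"
  shows "(\<Sum>m<2*a+b. Hf a (2*a+i) m * Pf a c m (a+k)) = (\<Sum>m<2*a+b. Pf a c (2*a+i) m * Tf a b r c m (a+k))"
  using assms(1,2,5) cfacts[OF assms(3-6)] unfolding sum_split3 Hf_def Pf_def Tf_def 
  by (auto cong: sum.cong_simp if_cong simp: sum.delta sum.delta' ring_distribs sum.distrib sum_subtractf add.assoc add_divide_distrib diff_divide_distrib)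

lemma t_zz: assumes "i < b" "k+1 < b" "c = -\<i>*(1+r)/of_nat b" "r*r+r = 2*of_nat a*of_nat b" "a \<ge> 1" "b \<ge> 1"
  shows "(\<Sum>m<2*a+b. Hf a (2*a+i) m * Pf a c m (2*a+k)) = (\<Sum>m<2*a+b. Pf a c (2*a+i) m * Tf a b r c m (2*a+k))"
  using assms(1,2,5) cfacts[OF assms(3-6)] unfolding sum_split3 Hf_def Pf_def Tf_def 
  by (auto cong: sum.cong_simp if_cong simp: sum.delta sum.delta' ring_distribs sum.distrib sum_subtractf add.assoc add_divide_distrib diff_divide_distrib)

lemma t_zw: assumes "i < b" "b = Suc k" "c = -\<i>*(1+r)/of_nat b" "r*r+r = 2*of_nat a*of_nat b" "a \<ge> 1" "b \<ge> 1"
  shows "(\<Sum>m<2*a+b. Hf a (2*a+i) m * Pf a c m (2*a+k)) = (\<Sum>m<2*a+b. Pf a c (2*a+i) m * Tf a b r c m (2*a+k))"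
  using assms(1,2,5) cfacts[OF assms(3-6)] unfolding sum_split3 Hf_def Pf_def Tf_def 
  by (auto cong: sum.cong_simp if_cong simp: sum.delta sum.delta' ring_distribs sum.distrib sum_subtractf add.assoc add_divide_distrib diff_divide_distrib)

lemma entry_eq: assumes "i < 2*a+b" "k < 2*a+b" "c = -\<i>*(1+r)/of_nat b" "r*r+r = 2*of_nat a*of_nat b" "a \<ge> 1" "b \<ge> 1"
  shows "(\<Sum>m<2*a+b. Hf a i m * Pf a c m k) = (\<Sum>m<2*a+b. Pf a c i m * Tf a b r c m k)"
proof -
  have rowcases: "i < a \<or> (\<exists>i0<a. i = a + i0) \<or> (\<exists>i0<b. i = 2*a + i0)"
    using assms(1) by (metis add_diff_inverse_nat mult_2 nat_add_left_cancel_less not_less)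
  have colcases: "k < a \<or> (\<exists>k0<a. k = a + k0) \<or> (\<exists>k0. k0+1<b \<and> k = 2*a + k0) \<or> (\<exists>k0. b = Suc k0 \<and> k = 2*a+k0)"
  proof -
    consider "k < a" | "a \<le> k" "k < 2*a" | "2*a \<le> k" "k + 1 < 2*a+b" | "k + 1 = 2*a+b" using assms(2) by linarith
    then show ?thesis
    proof cases
      case 2 then show ?thesis by (intro disjI2 disjI1 exI[of _ "k-a"]) auto
    next
      case 3
      then have "k - 2*a + 1 < b \<and> k = 2*a + (k - 2*a)" by auto
      then show ?thesis by blast
    next
      case 4
      then have "b = Suc (k - 2*a) \<and> k = 2*a + (k - 2*a)" using assms(6) by auto
      then show ?thesis by blast
    qed auto
  qed
  from rowcases show ?thesis
  proof (elim disjE exE conjE)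
    assume R: "i < a"
    from colcases show ?thesis
    proof (elim disjE exE conjE)
      assume C: "k < a"
      show ?thesis using t_xx[where i=i and k=k] R C assms(3-6) by simp
    next
      fix k0 assume C: "k0 < a" "k = a + k0"
      show ?thesis using t_xy[where i=i and k=k0] R C assms(3-6) by simp
    next
      fix k0 assume C: "k0+1 < b" "k = 2*a + k0"
      show ?thesis using t_xz[where i=i and k=k0] R C assms(3-6) by simp
    next
      fix k0 assume C: "b = Suc k0" "k = 2*a + k0"
      show ?thesis using t_xw[where i=i and k=k0] R C assms(3-6) by simp
    qed
  next
    fix i0 assume R: "i0 < a" "i = a + i0"
    from colcases show ?thesis
    proof (elim disjE exE conjE)
      assume C: "k < a"
      show ?thesis using t_yx[where i=i0 and k=k] R C assms(3-6) by simp
    next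
      fix k0 assume C: "k0 < a" "k = a + k0"
      show ?thesis using t_yy[where i=i0 and k=k0] R C assms(3-6) by simp
    next
      fix k0 assume C: "k0+1 < b" "k = 2*a + k0"
      show ?thesis using t_yz[where i=i0 and k=k0] R C assms(3-6) by simp
    next
      fix k0 assume C: "b = Suc k0" "k = 2*a + k0"
      show ?thesis using t_yw[where i=i0 and k=k0] R C assms(3-6) by simp
    qed
  next
    fix i0 assume R: "i0 < b" "i = 2*a + i0"
    from colcases show ?thesis
    proof (elim disjE exE conjE)
      assume C: "k < a"
      show ?thesis using t_zx[where i=i0 and k=k] R C assms(3-6) by simp
    next
      fix k0 assume C: "k0 < a" "k = a + k0"
      show ?thesis using t_zy[where i=i0 and k=k0] R C assms(3-6) by simp
    next
      fix k0 assume C: "k0+1 < b" "k = 2*a + k0"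
      show ?thesis using t_zz[where i=i0 and k=k0] R C assms(3-6) by simp
    next
      fix k0 assume C: "b = Suc k0" "k = 2*a + k0"
      show ?thesis using t_zw[where i=i0 and k=k0] R C assms(3-6) by simp
    qed
  qed
qed

lemma prod_split2: "(\<Prod>m<(x::nat)+y. f m) = (\<Prod>m<x. f m) * (\<Prod>m<y. f (x+m))"
  by (induction y) (auto simp: mult.assoc)

lemma prod_split3: "(\<Prod>m<2*(a::nat)+b. f m) = (\<Prod>j<a. f j) * (\<Prod>j<a. f (a+j)) * (\<Prod>l<b. f (2*a+l))"
  using prod_split2[where x="2*a" and y=b and f=f] prod_split2[where x=a and y=a and f=f] by (simp add: mult_2)

theorem lemma5p3:
  fixes a b :: nat
  assumes "a \<ge> 1" and "b \<ge> 1"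
  shows "char_poly (Xab_herm a b) =
     [: - complex_of_real ((-1 + sqrt (1 + 8 * real a * real b)) / 2), 1 :]
     * [: -1, 1 :] ^ a
     * [: 0, 1 :] ^ (b - 1)
     * [: 1, 1 :] ^ (a - 1)
     * [: - complex_of_real ((-1 - sqrt (1 + 8 * real a * real b)) / 2), 1 :]"
proof -
  define n where "n = 2*a+b"
  define s where "s = sqrt (1 + 8 * real a * real b)"
  define r where "r = complex_of_real ((-1 + s)/2)"
  define c where "c = -\<i>*(1+r)/of_nat b"
  have s2: "s*s = 1 + 8 * real a * real b" unfolding s_def by simp
  have rr: "r*r+r = 2*of_nat a*of_nat b"
  proof -
    have "((-1 + s)/2) * ((-1 + s)/2) + (-1 + s)/2 = 2 * real a * real b"
      using s2 by (simp add: field_simps)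
    then have "complex_of_real (((-1 + s)/2) * ((-1 + s)/2) + (-1 + s)/2) = complex_of_real (2 * real a * real b)"
      by simp
    then show ?thesis unfolding r_def by simp
  qed
  define Hm where "Hm = mat n n (\<lambda>(i,k). Hf a i k)"
  define P where "P = mat n n (\<lambda>(i,k). Pf a c i k)"
  define T where "T = mat n n (\<lambda>(i,k). Tf a b r c i k)"
  have dimH: "dim_row (Xab_herm a b) = n" "dim_col (Xab_herm a b) = n"
    unfolding Xab_herm_def herm_adj_def n_def by auto
  have H: "Xab_herm a b = Hm"
    by (rule eq_matI) (use dimH in \<open>auto simp: herm_entry Hm_def n_def\<close>)
  have carr: "Hm \<in> carrier_mat n n" "P \<in> carrier_mat n n" "T \<in> carrier_mat n n"
    unfolding Hm_def P_def T_def by auto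
  have HP: "Hm * P = P * T"
  proof (rule eq_matI)
    fix i k assume ik: "i < dim_row (P * T)" "k < dim_col (P * T)"
    then have ik': "i < n" "k < n" using carr by auto
    have "(Hm * P) $$ (i,k) = (\<Sum>m<n. Hf a i m * Pf a c m k)"
      using ik' carr unfolding Hm_def P_def
      by (auto simp: scalar_prod_def lessThan_atLeast0 intro!: sum.cong)
    also have "\<dots> = (\<Sum>m<n. Pf a c i m * Tf a b r c m k)"
      unfolding n_def by (rule entry_eq) (use ik' assms c_def rr in \<open>auto simp: n_def\<close>)
    also have "\<dots> = (P * T) $$ (i,k)"
      using ik' carr unfolding T_def P_def
      by (auto simp: scalar_prod_def lessThan_atLeast0 intro!: sum.cong)
    finally show "(Hm * P) $$ (i,k) = (P * T) $$ (i,k)" .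
  qed (use carr in auto)
  have detP: "det P \<noteq> 0"
  proof -
    have "det P = prod_list (diag_mat P)"
      by (rule det_lower_triangular[OF _ carr(2)]) (auto simp: P_def Pf_def n_def)
    moreover have "0 \<notin> set (diag_mat P)"
      using assms unfolding diag_mat_def P_def Pf_def n_def by auto
    ultimately show ?thesis by (simp add: prod_list_zero_iff)
  qed
  obtain Q where Q: "Q \<in> carrier_mat n n" "P * Q = 1\<^sub>m n" "Q * P = 1\<^sub>m n"
    using det_non_zero_imp_unit[OF carr(2) detP, of "()"] unfolding Units_def ring_mat_def by auto
  have "Hm = Hm * (P * Q)" using carr by (simp add: Q)
  also have "\<dots> = (Hm * P) * Q" using carr Q by (simp add: assoc_mult_mat)
  also have "\<dots> = P * T * Q" by (simp add: HP)
  finally have "similar_mat Hm T"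
    by (intro similar_matI[where n=n and P=P and Q=Q]) (use carr Q in auto)
  then have cp: "char_poly Hm = char_poly T" by (rule char_poly_similar)
  have ut: "upper_triangular T"
    unfolding upper_triangular_def T_def Tf_def n_def by auto
  have "char_poly T = (\<Prod>a\<leftarrow>diag_mat T. [:- a, 1:])"
    by (rule char_poly_upper_triangular[OF carr(3) ut])
  also have "\<dots> = (\<Prod>i<n. [:- Tf a b r c i i, 1:])"
    unfolding diag_mat_def using carr
    by (simp add: prod.distinct_set_conv_list[symmetric] lessThan_atLeast0 T_def)
  also have "\<dots> = [:-r,1:] * [:-1,1:]^a * [:0,1:]^(b-1) * [:1,1:]^(a-1) * [:1+r,1:]"
  proof -
    obtain a' where a': "a = Suc a'" using assms(1) by (cases a) auto
    obtain b' where b': "b = Suc b'" using assms(2) by (cases b) auto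
    have cf: "complex_of_nat b * (\<i> * c) = 1 + r"
      using cfacts(1)[OF c_def rr assms(1,2)] .
    have p1: "(\<Prod>j<a. [:- Tf a b r c j j, 1:]) = [:-1,1:]^a"
      by (simp add: Tf_def)
    have d2: "Tf a b r c a a = r" using assms by (simp add: Tf_def)
    have p2: "(\<Prod>j<a. [:- Tf a b r c (a+j) (a+j), 1:]) = [:-r,1:] * [:1,1:]^a'"
      unfolding a' prod.lessThan_Suc_shift using d2 a' by (simp add: Tf_def)
    have d5: "Tf a b r c (2*a+b') (2*a+b') = -(1+r)"
    proof -
      have "Tf a b r c (2*a+b') (2*a+b') = -\<i>*c*of_nat (Suc b')"
        using assms b' by (simp add: Tf_def)
      also have "\<dots> = -(1+r)" using cf b' by (simp add: algebra_simps)
      finally show ?thesis .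
    qed
    have p3: "(\<Prod>l<b. [:- Tf a b r c (2*a+l) (2*a+l), 1:]) = [:0,1:]^b' * [:1+r,1:]"
      unfolding b' prod.lessThan_Suc using d5 b' by (simp add: Tf_def add.commute)
    show ?thesis
    proof -
      have e: "a - 1 = a'" "b - 1 = b'" using a' b' by auto
      show ?thesis unfolding n_def prod_split3 p1 p2 p3 e by (simp only: mult_ac)
    qed
  qed
  also have "\<dots> = [: - complex_of_real ((-1 + sqrt (1 + 8 * real a * real b)) / 2), 1 :]
     * [: -1, 1 :] ^ a
     * [: 0, 1 :] ^ (b - 1)
     * [: 1, 1 :] ^ (a - 1)
     * [: - complex_of_real ((-1 - sqrt (1 + 8 * real a * real b)) / 2), 1 :]"
  proof -
    have "1 + r = - complex_of_real ((-1 - s) / 2)"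
      unfolding r_def by (simp add: field_simps)
    then show ?thesis unfolding r_def s_def by simp
  qed
  finally show ?thesis using H cp by simp
qed

end
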